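(* Let $\Gamma$ be a symmetric bimatrix game. If $\Gamma$ has a Nash equilibrium that is not symmetric, i.e., $\mathrm{Nash}_{\mathrm{sym}}(\Gamma)\subsetneq\mathrm{Nash}(\Gamma)$, then $\mathrm{XE}_{\mathrm{sym}}(\Gamma)\subsetneq\mathrm{CE}_{\mathrm{sym}}(\Gamma)$.
   Context: A symmetric bimatrix game: two players with the same finite strategy set $C_1$ ($|C_1|=m\ge2$) and utilities with $u_1(s_1,s_2)=u_2(s_2,s_1)$. $\mathrm{Nash}(\Gamma)$ is the set of mixed Nash equilibria $(\pi_1,\pi_2)$; $\mathrm{Nash}_{\mathrm{sym}}(\Gamma)$ those with $\pi_1=\pi_2$. Distributions on $C_1\times C_1$ are $m\times m$ nonnegative matrices summing to one. A correlated equilibrium is a distribution $\pi$ such that for each player $i$ and all $s_i,t_i$, $\sum_{s_{-i}}[u_i(t_i,s_{-i})-u_i(s)]\pi(s)\le0$. $\mathrm{CE}_{\mathrm{sym}}(\Gamma)$ is the set of correlated equilibria that are symmetric matrices, and $\mathrm{XE}_{\mathrm{sym}}(\Gamma)$ (exchangeable equilibria) is the set of correlated equilibria lying in $\mathrm{conv}\{xx^T:x\text{ a probability vector on }C_1\}$. *)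

theory Defs
  imports "HOL-Analysis.Analysis"
begin

text \<open>Strategy set C1 is the finite type 'n (m = CARD('n)).  Utilities are
  u1 u2 :: 'n \<Rightarrow> 'n \<Rightarrow> real, with ui s1 s2 the payoff of player i at
  profile (s1,s2).  Mixed strategies are vectors in real^'n, distributions on
  C1 x C1 are m x m matrices real^'n^'n (row = player 1, column = player 2).\<close>

definition symmetric_game :: "('n \<Rightarrow> 'n \<Rightarrow> real) \<Rightarrow> ('n \<Rightarrow> 'n \<Rightarrow> real) \<Rightarrow> bool" where
  "symmetric_game u1 u2 \<longleftrightarrow> (\<forall>s1 s2. u1 s1 s2 = u2 s2 s1)"

definition prob_vec :: "real ^ 'n::finite \<Rightarrow> bool" where
  "prob_vec x \<longleftrightarrow> (\<forall>i. 0 \<le> x $ i) \<and> (\<Sum>i\<in>UNIV. x $ i) = 1"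

definition prob_mat :: "real ^ 'n::finite ^ 'n \<Rightarrow> bool" where
  "prob_mat P \<longleftrightarrow> (\<forall>i j. 0 \<le> P $ i $ j) \<and> (\<Sum>i\<in>UNIV. \<Sum>j\<in>UNIV. P $ i $ j) = 1"

definition Nash :: "('n::finite \<Rightarrow> 'n \<Rightarrow> real) \<Rightarrow> ('n \<Rightarrow> 'n \<Rightarrow> real) \<Rightarrow> ((real ^ 'n) \<times> (real ^ 'n)) set" where
  "Nash u1 u2 = {(p, q) | p q. prob_vec p \<and> prob_vec q \<and>
     (\<forall>t. (\<Sum>s2\<in>UNIV. q $ s2 * u1 t s2) \<le> (\<Sum>s1\<in>UNIV. \<Sum>s2\<in>UNIV. p $ s1 * q $ s2 * u1 s1 s2)) \<and>
     (\<forall>t. (\<Sum>s1\<in>UNIV. p $ s1 * u2 s1 t) \<le> (\<Sum>s1\<in>UNIV. \<Sum>s2\<in>UNIV. p $ s1 * q $ s2 * u2 s1 s2))}"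

definition Nash_sym :: "('n::finite \<Rightarrow> 'n \<Rightarrow> real) \<Rightarrow> ('n \<Rightarrow> 'n \<Rightarrow> real) \<Rightarrow> ((real ^ 'n) \<times> (real ^ 'n)) set" where
  "Nash_sym u1 u2 = {(p, q) | p q. (p, q) \<in> Nash u1 u2 \<and> p = q}"

definition CE :: "('n::finite \<Rightarrow> 'n \<Rightarrow> real) \<Rightarrow> ('n \<Rightarrow> 'n \<Rightarrow> real) \<Rightarrow> (real ^ 'n ^ 'n) set" where
  "CE u1 u2 = {P. prob_mat P \<and>
     (\<forall>s t. (\<Sum>s2\<in>UNIV. (u1 t s2 - u1 s s2) * P $ s $ s2) \<le> 0) \<and>
     (\<forall>s t. (\<Sum>s1\<in>UNIV. (u2 s1 t - u2 s1 s) * P $ s1 $ s) \<le> 0)}"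

definition CE_sym :: "('n::finite \<Rightarrow> 'n \<Rightarrow> real) \<Rightarrow> ('n \<Rightarrow> 'n \<Rightarrow> real) \<Rightarrow> (real ^ 'n ^ 'n) set" where
  "CE_sym u1 u2 = {P \<in> CE u1 u2. transpose P = P}"

definition outer_self :: "real ^ 'n::finite \<Rightarrow> real ^ 'n ^ 'n" where
  "outer_self x = (\<chi> i j. x $ i * x $ j)"

definition XE_sym :: "('n::finite \<Rightarrow> 'n \<Rightarrow> real) \<Rightarrow> ('n \<Rightarrow> 'n \<Rightarrow> real) \<Rightarrow> (real ^ 'n ^ 'n) set" where
  "XE_sym u1 u2 = CE u1 u2 \<inter> convex hull {outer_self x | x. prob_vec x}"

end

theory Submission
  imports Defs
begin

lemma best_resp:
  fixes x w :: "'n::finite \<Rightarrow> real"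
  assumes nn: "\<And>i. 0 \<le> x i" and s1: "(\<Sum>i\<in>UNIV. x i) = 1"
    and le: "\<And>t. w t \<le> (\<Sum>i\<in>UNIV. x i * w i)"
  shows "x s * (w t - w s) \<le> 0"
proof -
  define V where "V = (\<Sum>i\<in>UNIV. x i * w i)"
  have "(\<Sum>i\<in>UNIV. x i * (V - w i)) = V * (\<Sum>i\<in>UNIV. x i) - (\<Sum>i\<in>UNIV. x i * w i)"
    by (simp add: algebra_simps sum_subtractf sum_distrib_left)
  hence "(\<Sum>i\<in>UNIV. x i * (V - w i)) = V * (\<Sum>i\<in>UNIV. x i) - V" unfolding V_def by simp
  hence z: "(\<Sum>i\<in>UNIV. x i * (V - w i)) = 0" using s1 by simp
  have "\<forall>i\<in>UNIV. 0 \<le> x i * (V - w i)" using nn le V_def by auto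
  hence "x s * (V - w s) = 0" using z sum_nonneg_eq_0_iff[of UNIV "\<lambda>i. x i * (V - w i)"] by auto
  moreover have "x s * (w t - V) \<le> 0" using nn[of s] le[of t] V_def
    by (simp add: mult_nonneg_nonpos)
  moreover have "x s * (w t - w s) = x s * (w t - V) + x s * (V - w s)" by (simp add: algebra_simps)
  ultimately show ?thesis by linarith
qed

lemma nash_prod1:
  assumes "(p,q) \<in> Nash u1 u2"
  shows "(\<Sum>s2\<in>UNIV. (u1 t s2 - u1 s s2) * (p$s * q$s2)) \<le> 0"
proof -
  from assms have pp: "prob_vec p" and pq: "prob_vec q" and
    c: "\<And>t. (\<Sum>s2\<in>UNIV. q $ s2 * u1 t s2) \<le> (\<Sum>s1\<in>UNIV. \<Sum>s2\<in>UNIV. p $ s1 * q $ s2 * u1 s1 s2)"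
    unfolding Nash_def by auto
  define w where "w t = (\<Sum>s2\<in>UNIV. q $ s2 * u1 t s2)" for t
  have "(\<Sum>s1\<in>UNIV. \<Sum>s2\<in>UNIV. p $ s1 * q $ s2 * u1 s1 s2) = (\<Sum>i\<in>UNIV. p$i * w i)"
    unfolding w_def by (simp add: sum_distrib_left mult.assoc)
  hence "\<And>t. w t \<le> (\<Sum>i\<in>UNIV. p$i * w i)" using c unfolding w_def by metis
  hence "p$s * (w t - w s) \<le> 0"
    using best_resp[of "\<lambda>i. p$i" w s t] pp unfolding prob_vec_def by auto
  moreover have "(\<Sum>s2\<in>UNIV. (u1 t s2 - u1 s s2) * (p$s * q$s2)) = p$s * (w t - w s)"
    unfolding w_def by (simp add: algebra_simps sum_subtractf sum_distrib_left)
  ultimately show ?thesis by simp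
qed

lemma nash_prod2:
  assumes "(p,q) \<in> Nash u1 u2"
  shows "(\<Sum>s1\<in>UNIV. (u2 s1 t - u2 s1 s) * (p$s1 * q$s)) \<le> 0"
proof -
  from assms have pp: "prob_vec p" and pq: "prob_vec q" and
    c: "\<And>t. (\<Sum>s1\<in>UNIV. p $ s1 * u2 s1 t) \<le> (\<Sum>s1\<in>UNIV. \<Sum>s2\<in>UNIV. p $ s1 * q $ s2 * u2 s1 s2)"
    unfolding Nash_def by auto
  define w where "w t = (\<Sum>s1\<in>UNIV. p $ s1 * u2 s1 t)" for t
  have "(\<Sum>s1\<in>UNIV. \<Sum>s2\<in>UNIV. p $ s1 * q $ s2 * u2 s1 s2) = (\<Sum>i\<in>UNIV. q$i * w i)"
    unfolding w_def by (subst sum.swap) (simp add: sum_distrib_left algebra_simps)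
  hence "\<And>t. w t \<le> (\<Sum>i\<in>UNIV. q$i * w i)" using c unfolding w_def by metis
  hence "q$s * (w t - w s) \<le> 0"
    using best_resp[of "\<lambda>i. q$i" w s t] pq unfolding prob_vec_def by auto
  moreover have "(\<Sum>s1\<in>UNIV. (u2 s1 t - u2 s1 s) * (p$s1 * q$s)) = q$s * (w t - w s)"
    unfolding w_def by (simp add: algebra_simps sum_subtractf sum_distrib_left)
  ultimately show ?thesis by simp
qed

lemma nash_swap:
  assumes "symmetric_game u1 u2" "(p,q) \<in> Nash u1 u2"
  shows "(q,p) \<in> Nash u1 u2"
proof -
  have sg: "\<And>a b. u1 a b = u2 b a" using assms(1) unfolding symmetric_game_def by auto
  from assms(2) have pp: "prob_vec p" and pq: "prob_vec q" and
    c1: "\<And>t. (\<Sum>s2\<in>UNIV. q $ s2 * u1 t s2) \<le> (\<Sum>s1\<in>UNIV. \<Sum>s2\<in>UNIV. p $ s1 * q $ s2 * u1 s1 s2)" and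
    c2: "\<And>t. (\<Sum>s1\<in>UNIV. p $ s1 * u2 s1 t) \<le> (\<Sum>s1\<in>UNIV. \<Sum>s2\<in>UNIV. p $ s1 * q $ s2 * u2 s1 s2)"
    unfolding Nash_def by auto
  have e1: "(\<Sum>s1\<in>UNIV. \<Sum>s2\<in>UNIV. q $ s1 * p $ s2 * u1 s1 s2) = (\<Sum>s1\<in>UNIV. \<Sum>s2\<in>UNIV. p $ s1 * q $ s2 * u2 s1 s2)"
    by (subst sum.swap) (simp add: sg algebra_simps)
  have e2: "(\<Sum>s1\<in>UNIV. \<Sum>s2\<in>UNIV. q $ s1 * p $ s2 * u2 s1 s2) = (\<Sum>s1\<in>UNIV. \<Sum>s2\<in>UNIV. p $ s1 * q $ s2 * u1 s1 s2)"
    by (subst sum.swap) (simp add: sg algebra_simps)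
  show ?thesis unfolding Nash_def
  proof (clarsimp simp: pp pq, intro conjI allI)
    fix t
    show "(\<Sum>s2\<in>UNIV. p $ s2 * u1 t s2) \<le> (\<Sum>s1\<in>UNIV. \<Sum>s2\<in>UNIV. q $ s1 * p $ s2 * u1 s1 s2)"
      using c2[of t] unfolding e1 by (simp add: sg)
    show "(\<Sum>s1\<in>UNIV. q $ s1 * u2 s1 t) \<le> (\<Sum>s1\<in>UNIV. \<Sum>s2\<in>UNIV. q $ s1 * p $ s2 * u2 s1 s2)"
      using c1[of t] unfolding e2 by (simp add: sg)
  qed
qed

lemma exists_gt:
  fixes p q :: "real ^ 'n::finite"
  assumes "prob_vec p" "prob_vec q" "p \<noteq> q"
  shows "\<exists>i. p$i > q$i"
proof (rule ccontr)
  assume "\<not> ?thesis"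
  hence le: "\<And>i. p$i \<le> q$i" by (simp add: not_less)
  from assms(3) obtain k where "p$k \<noteq> q$k" by (auto simp: vec_eq_iff)
  hence "p$k < q$k" using le[of k] by simp
  hence "(\<Sum>i\<in>UNIV. p$i) < (\<Sum>i\<in>UNIV. q$i)"
    using sum_strict_mono_ex1[of UNIV "\<lambda>i. p$i" "\<lambda>i. q$i"] le \<open>p$k < q$k\<close> by auto
  thus False using assms(1,2) unfolding prob_vec_def by simp
qed

lemma sym_hull:
  "M \<in> convex hull {outer_self x | x. prob_vec x} \<Longrightarrow> transpose M = M"
proof -
  have "convex {M :: real^'n^'n. transpose M = M}"
    unfolding convex_def by (auto simp: vec_eq_iff transpose_def)
  moreover have "{outer_self x | x. prob_vec x} \<subseteq> {M. transpose M = M}"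
    by (auto simp: vec_eq_iff transpose_def outer_self_def)
  ultimately have "convex hull {outer_self x | x. prob_vec x} \<subseteq> {M :: real^'n^'n. transpose M = M}"
    using hull_minimal[where S=convex] by blast
  thus "M \<in> convex hull {outer_self x | x. prob_vec x} \<Longrightarrow> transpose M = M" by auto
qed

lemma psd_hull:
  fixes v :: "'n::finite \<Rightarrow> real"
  shows "M \<in> convex hull {outer_self x | x. prob_vec x} \<Longrightarrow> 0 \<le> (\<Sum>i\<in>UNIV. \<Sum>j\<in>UNIV. v i * v j * M$i$j)"
proof -
  have "convex {M :: real^'n^'n. 0 \<le> (\<Sum>i\<in>UNIV. \<Sum>j\<in>UNIV. v i * v j * M$i$j)}"
  proof (unfold convex_def, clarsimp)
    fix x y :: "real^'n^'n" and u w :: real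
    assume a: "0 \<le> (\<Sum>i\<in>UNIV. \<Sum>j\<in>UNIV. v i * v j * x$i$j)" "0 \<le> (\<Sum>i\<in>UNIV. \<Sum>j\<in>UNIV. v i * v j * y$i$j)"
      "0 \<le> u" "0 \<le> w"
    have "(\<Sum>i\<in>UNIV. \<Sum>j\<in>UNIV. v i * v j * (u * x$i$j + w * y$i$j))
      = u * (\<Sum>i\<in>UNIV. \<Sum>j\<in>UNIV. v i * v j * x$i$j) + w * (\<Sum>i\<in>UNIV. \<Sum>j\<in>UNIV. v i * v j * y$i$j)"
      by (simp add: algebra_simps sum.distrib sum_distrib_left)
    thus "0 \<le> (\<Sum>i\<in>UNIV. \<Sum>j\<in>UNIV. v i * v j * (u * x$i$j + w * y$i$j))"
      using a by simp
  qed
  moreover have "{outer_self x | x. prob_vec x} \<subseteq> {M. 0 \<le> (\<Sum>i\<in>UNIV. \<Sum>j\<in>UNIV. v i * v j * M$i$j)}"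
  proof clarsimp
    fix x :: "real^'n"
    have "(\<Sum>i\<in>UNIV. \<Sum>j\<in>UNIV. v i * v j * outer_self x $ i $ j) = (\<Sum>i\<in>UNIV. v i * x$i) * (\<Sum>j\<in>UNIV. v j * x$j)"
      unfolding outer_self_def sum_product by (simp add: algebra_simps)
    thus "0 \<le> (\<Sum>i\<in>UNIV. \<Sum>j\<in>UNIV. v i * v j * outer_self x $ i $ j)" by simp
  qed
  ultimately have "convex hull {outer_self x | x. prob_vec x} \<subseteq> {M. 0 \<le> (\<Sum>i\<in>UNIV. \<Sum>j\<in>UNIV. v i * v j * M$i$j)}"
    using hull_minimal[where S=convex] by blast
  thus "M \<in> convex hull {outer_self x | x. prob_vec x} \<Longrightarrow> 0 \<le> (\<Sum>i\<in>UNIV. \<Sum>j\<in>UNIV. v i * v j * M$i$j)" by auto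
qed

theorem theorem3p5:
  fixes u1 u2 :: "'n::finite \<Rightarrow> 'n \<Rightarrow> real"
  assumes "CARD('n) \<ge> 2"
    and "symmetric_game u1 u2"
    and "Nash_sym u1 u2 \<subset> Nash u1 u2"
  shows "XE_sym u1 u2 \<subset> CE_sym u1 u2"
proof -
  have sub: "XE_sym u1 u2 \<subseteq> CE_sym u1 u2"
    unfolding XE_sym_def CE_sym_def using sym_hull by blast
  from assms(3) obtain p q where N: "(p,q) \<in> Nash u1 u2" and "(p,q) \<notin> Nash_sym u1 u2" by auto
  hence pq: "p \<noteq> q" unfolding Nash_sym_def by auto
  have N2: "(q,p) \<in> Nash u1 u2" using nash_swap[OF assms(2) N] .
  have pp: "prob_vec p" and qq: "prob_vec q" using N unfolding Nash_def by auto
  obtain i where i: "p$i > q$i" using exists_gt[OF pp qq pq] by blast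
  obtain j where j: "q$j > p$j" using exists_gt[OF qq pp] pq by metis
  have pn: "\<And>k. 0 \<le> p$k" and qn: "\<And>k. 0 \<le> q$k" using pp qq unfolding prob_vec_def by auto
  define P :: "real^'n^'n" where "P = (\<chi> a b. (p$a * q$b + q$a * p$b) / 2)"
  have PCE: "P \<in> CE_sym u1 u2"
  proof -
    have pm: "prob_mat P" unfolding prob_mat_def P_def
    proof (intro conjI allI)
      fix a b show "0 \<le> (\<chi> a b. (p$a * q$b + q$a * p$b) / 2) $ a $ b" using pn qn by simp
    next
      have "(\<Sum>a\<in>UNIV. \<Sum>b\<in>UNIV. (p$a * q$b + q$a * p$b) / 2)
        = ((\<Sum>a\<in>UNIV. p$a) * (\<Sum>b\<in>UNIV. q$b) + (\<Sum>a\<in>UNIV. q$a) * (\<Sum>b\<in>UNIV. p$b)) / 2"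
        by (simp add: sum_product sum.distrib sum_divide_distrib add_divide_distrib)
      thus "(\<Sum>a\<in>UNIV. \<Sum>b\<in>UNIV. (\<chi> a b. (p$a * q$b + q$a * p$b) / 2) $ a $ b) = 1"
        using pp qq unfolding prob_vec_def by simp
    qed
    have c1: "(\<Sum>s2\<in>UNIV. (u1 t s2 - u1 s s2) * P $ s $ s2) \<le> 0" for s t
    proof -
      have "(\<Sum>s2\<in>UNIV. (u1 t s2 - u1 s s2) * P $ s $ s2) =
        ((\<Sum>s2\<in>UNIV. (u1 t s2 - u1 s s2) * (p$s * q$s2)) + (\<Sum>s2\<in>UNIV. (u1 t s2 - u1 s s2) * (q$s * p$s2))) / 2"
      proof -
        have "(\<Sum>s2\<in>UNIV. (u1 t s2 - u1 s s2) * P $ s $ s2) = (\<Sum>s2\<in>UNIV. ((u1 t s2 - u1 s s2) * (p$s * q$s2) + (u1 t s2 - u1 s s2) * (q$s * p$s2)) / 2)"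
          unfolding P_def by (rule sum.cong) (simp_all add: algebra_simps)
        thus ?thesis by (simp add: sum.distrib sum_divide_distrib[symmetric])
      qed
      thus ?thesis using nash_prod1[OF N, of t s] nash_prod1[OF N2, of t s] by simp
    qed
    have c2: "(\<Sum>s1\<in>UNIV. (u2 s1 t - u2 s1 s) * P $ s1 $ s) \<le> 0" for s t
    proof -
      have "(\<Sum>s1\<in>UNIV. (u2 s1 t - u2 s1 s) * P $ s1 $ s) =
        ((\<Sum>s1\<in>UNIV. (u2 s1 t - u2 s1 s) * (p$s1 * q$s)) + (\<Sum>s1\<in>UNIV. (u2 s1 t - u2 s1 s) * (q$s1 * p$s))) / 2"
      proof -
        have "(\<Sum>s1\<in>UNIV. (u2 s1 t - u2 s1 s) * P $ s1 $ s) = (\<Sum>s1\<in>UNIV. ((u2 s1 t - u2 s1 s) * (p$s1 * q$s) + (u2 s1 t - u2 s1 s) * (q$s1 * p$s)) / 2)"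
          unfolding P_def by (rule sum.cong) (simp_all add: algebra_simps)
        thus ?thesis by (simp add: sum.distrib sum_divide_distrib[symmetric])
      qed
      thus ?thesis using nash_prod2[OF N, of t s] nash_prod2[OF N2, of t s] by simp
    qed
    have "transpose P = P" unfolding P_def by (simp add: vec_eq_iff transpose_def)
    thus ?thesis using pm c1 c2 unfolding CE_sym_def CE_def by blast
  qed
  have ij: "i \<noteq> j" using i j by auto
  define a where "a = q$j + p$j"
  define b where "b = q$i + p$i"
  define v where "v k = (if k = i then a else 0) - (if k = j then b else 0)" for k
  have vg: "(\<Sum>k\<in>UNIV. v k * r$k) = a * r$i - b * r$j" for r :: "real^'n"
  proof -
    have "(\<Sum>k\<in>UNIV. v k * r$k) = (\<Sum>k\<in>UNIV. (if k=i then a*r$k else 0) - (if k=j then b*r$k else 0))"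
      using ij by (intro sum.cong) (auto simp: v_def algebra_simps)
    also have "\<dots> = a * r$i - b * r$j" using ij by (simp add: sum_subtractf)
    finally show ?thesis .
  qed
  note vp = vg[of p] and vq = vg[of q]
  have D: "q$j * p$i - q$i * p$j > 0"
  proof -
    have "q$i * p$j \<le> p$i * p$j" using i qn pn by (simp add: mult_right_mono)
    also have "\<dots> < p$i * q$j" using i j qn[of i] by (simp add: mult_strict_left_mono)
    finally show ?thesis by (simp add: algebra_simps)
  qed
  have "(\<Sum>x\<in>UNIV. \<Sum>y\<in>UNIV. v x * v y * P$x$y) = (\<Sum>k\<in>UNIV. v k * p$k) * (\<Sum>k\<in>UNIV. v k * q$k)"
  proof -
    define A where "A = (\<Sum>x\<in>UNIV. \<Sum>y\<in>UNIV. v x * p$x * (v y * q$y))"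
    define B where "B = (\<Sum>x\<in>UNIV. \<Sum>y\<in>UNIV. v x * q$x * (v y * p$y))"
    have "(\<Sum>x\<in>UNIV. \<Sum>y\<in>UNIV. v x * v y * P$x$y) = (\<Sum>x\<in>UNIV. \<Sum>y\<in>UNIV. (v x * p$x * (v y * q$y) + v x * q$x * (v y * p$y)) / 2)"
      unfolding P_def by (intro sum.cong refl) (simp add: algebra_simps)
    also have "\<dots> = (A + B) / 2"
      unfolding A_def B_def by (simp add: sum.distrib sum_divide_distrib[symmetric])
    also have "B = A" unfolding A_def B_def by (subst sum.swap) (simp add: algebra_simps)
    also have "A = (\<Sum>k\<in>UNIV. v k * p$k) * (\<Sum>k\<in>UNIV. v k * q$k)"
      unfolding A_def sum_product ..
    finally show ?thesis by simp
  qed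
  also have "\<dots> = (q$j * p$i - q$i * p$j) * (-(q$j * p$i - q$i * p$j))"
    unfolding vp vq a_def b_def by (simp add: algebra_simps)
  also have "\<dots> < 0" using D by (simp add: mult_pos_neg)
  finally have "P \<notin> XE_sym u1 u2" unfolding XE_sym_def using psd_hull[of P v] by auto
  thus ?thesis using sub PCE by blast
qed

end
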